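(* Let $\mathfrak{h}_3$ be the (real, 3-dimensional) Heisenberg Lie algebra and $\mathrm{ad}^*$ its coadjoint representation on the dual space $\mathfrak{h}_3^*$. Up to isometric Lie algebra isomorphism, every butterfly algebra is $\mathfrak{b}_6=\mathfrak{h}_3\oplus_{\mathrm{ad}^*}\mathfrak{h}_3^*$ with the bilinear form $$(X+X^*,\,Y+Y^* )=X^*(Y)+Y^*(X)$$ for $X,Y\in\mathfrak{h}_3$ and $X^*,Y^*\in\mathfrak{h}_3^*$.
   Context: A butterfly algebra is a real 2-step nilpotent Lie algebra of dimension $6$ endowed with a symmetric bilinear form $(\cdot,\cdot)$ that is invariant, i.e. $([X,Y],Z)=-(Y,[X,Z])$, such that some element of its commutator subalgebra is not in the radical $\{X\mid (X,\cdot)=0\}$ of the form. The semidirect sum $\mathfrak{h}_3\oplus_{\mathrm{ad}^*}\mathfrak{h}_3^*$ is the vector space $\mathfrak{h}_3\oplus\mathfrak{h}_3^*$ with bracket $[X+\xi,Y+\eta]=[X,Y]+\mathrm{ad}^*(X)\eta-\mathrm{ad}^*(Y)\xi$, where $\mathrm{ad}^*(X)\eta=-\eta\circ\mathrm{ad}(X)$, and $\mathfrak{h}_3^*$ is an abelian ideal. *)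

theory Defs
  imports "HOL-Analysis.Analysis"
begin

definition lie_algebra :: "('a::real_vector \<Rightarrow> 'a \<Rightarrow> 'a) \<Rightarrow> bool" where
  "lie_algebra br \<longleftrightarrow> bilinear br \<and> (\<forall>x. br x x = 0) \<and>
     (\<forall>x y z. br x (br y z) + br y (br z x) + br z (br x y) = 0)"

definition commutator_subalgebra :: "('a::real_vector \<Rightarrow> 'a \<Rightarrow> 'a) \<Rightarrow> 'a set" where
  "commutator_subalgebra br = span {br x y | x y. True}"

definition two_step_nilpotent :: "('a::real_vector \<Rightarrow> 'a \<Rightarrow> 'a) \<Rightarrow> bool" where
  "two_step_nilpotent br \<longleftrightarrow> (\<forall>x y z. br x (br y z) = 0) \<and> (\<exists>x y. br x y \<noteq> 0)"

definition invariant_symmetric_form ::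
  "('a::real_vector \<Rightarrow> 'a \<Rightarrow> 'a) \<Rightarrow> ('a \<Rightarrow> 'a \<Rightarrow> real) \<Rightarrow> bool" where
  "invariant_symmetric_form br B \<longleftrightarrow> bilinear B \<and> (\<forall>x y. B x y = B y x) \<and>
     (\<forall>x y z. B (br x y) z = - B y (br x z))"

definition form_radical :: "('a \<Rightarrow> 'a \<Rightarrow> real) \<Rightarrow> 'a set" where
  "form_radical B = {x. \<forall>y. B x y = 0}"

text \<open>Butterfly algebra (dimension 6 is imposed separately via DIM).\<close>
definition butterfly_algebra ::
  "('a::real_vector \<Rightarrow> 'a \<Rightarrow> 'a) \<Rightarrow> ('a \<Rightarrow> 'a \<Rightarrow> real) \<Rightarrow> bool" where
  "butterfly_algebra br B \<longleftrightarrow> lie_algebra br \<and> two_step_nilpotent br \<and>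
     invariant_symmetric_form br B \<and>
     (\<exists>z\<in>commutator_subalgebra br. z \<notin> form_radical B)"

text \<open>Heisenberg algebra h3 = R^3 with basis e1,e2,e3 and [e1,e2] = e3.\<close>
definition h3_bracket :: "real^3 \<Rightarrow> real^3 \<Rightarrow> real^3" where
  "h3_bracket x y = (\<chi> i. if i = 3 then x$1 * y$2 - x$2 * y$1 else 0)"

text \<open>The dual h3* is identified with R^3 via the standard pairing:
  a vector xi represents the functional Y \<mapsto> xi \<bullet> Y.\<close>
definition h3_pair :: "real^3 \<Rightarrow> real^3 \<Rightarrow> real" where
  "h3_pair xi Y = xi \<bullet> Y"

text \<open>Coadjoint action: (ad*(X) eta)(Y) = - eta([X,Y]); the coordinates of this
  functional are its values on the standard basis.\<close>
definition coad :: "real^3 \<Rightarrow> real^3 \<Rightarrow> real^3" where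
  "coad X eta = (\<chi> i. - h3_pair eta (h3_bracket X (axis i 1)))"

definition b6_bracket :: "((real^3) \<times> (real^3)) \<Rightarrow> ((real^3) \<times> (real^3)) \<Rightarrow> ((real^3) \<times> (real^3))" where
  "b6_bracket u v = (h3_bracket (fst u) (fst v), coad (fst u) (snd v) - coad (fst v) (snd u))"

definition b6_form :: "((real^3) \<times> (real^3)) \<Rightarrow> ((real^3) \<times> (real^3)) \<Rightarrow> real" where
  "b6_form u v = h3_pair (snd u) (fst v) + h3_pair (snd v) (fst u)"

definition isometric_lie_iso ::
  "('a::real_vector \<Rightarrow> 'a \<Rightarrow> 'a) \<Rightarrow> ('a \<Rightarrow> 'a \<Rightarrow> real) \<Rightarrow>
   ('b::real_vector \<Rightarrow> 'b \<Rightarrow> 'b) \<Rightarrow> ('b \<Rightarrow> 'b \<Rightarrow> real) \<Rightarrow> ('a \<Rightarrow> 'b) \<Rightarrow> bool" where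
  "isometric_lie_iso br B br' B' f \<longleftrightarrow> linear f \<and> bij f \<and>
     (\<forall>x y. f (br x y) = br' (f x) (f y)) \<and> (\<forall>x y. B' (f x) (f y) = B x y)"

end

theory Submission
  imports Defs
begin
lemma b6_comps:
  "fst (b6_bracket u v) $ 1 = 0" "fst (b6_bracket u v) $ 2 = 0"
  "fst (b6_bracket u v) $ 3 = fst u $ 1 * fst v $ 2 - fst u $ 2 * fst v $ 1"
  "snd (b6_bracket u v) $ 1 = snd v $ 3 * fst u $ 2 - snd u $ 3 * fst v $ 2"
  "snd (b6_bracket u v) $ 2 = snd u $ 3 * fst v $ 1 - snd v $ 3 * fst u $ 1"
  "snd (b6_bracket u v) $ 3 = 0"
  by (simp_all add: b6_bracket_def h3_bracket_def coad_def h3_pair_def inner_vec_def sum_3 axis_def algebra_simps)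

lemma b6_form_eq: "b6_form u v = snd u $ 1 * fst v $ 1 + snd u $ 2 * fst v $ 2 + snd u $ 3 * fst v $ 3
   + snd v $ 1 * fst u $ 1 + snd v $ 2 * fst u $ 2 + snd v $ 3 * fst u $ 3"
  by (simp add: b6_form_def h3_pair_def inner_vec_def sum_3)

lemma build:
  fixes br :: "'a::euclidean_space \<Rightarrow> 'a \<Rightarrow> 'a" and B :: "'a \<Rightarrow> 'a \<Rightarrow> real"
  assumes dim: "DIM('a) = 6" and bbr: "bilinear br" and bB: "bilinear B"
  and t: "br e1 e1 = 0" "br e1 e2 = f3" "br e1 e3 = - f2"
         "br e2 e1 = - f3" "br e2 e2 = 0" "br e2 e3 = f1"
         "br e3 e1 = f2" "br e3 e2 = - f1" "br e3 e3 = 0"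
  and z: "\<And>x. br x f1 = 0" "\<And>x. br x f2 = 0" "\<And>x. br x f3 = 0"
         "\<And>x. br f1 x = 0" "\<And>x. br f2 x = 0" "\<And>x. br f3 x = 0"
  and g: "B e1 e1 = 0" "B e1 e2 = 0" "B e1 e3 = 0" "B e2 e1 = 0" "B e2 e2 = 0" "B e2 e3 = 0"
         "B e3 e1 = 0" "B e3 e2 = 0" "B e3 e3 = 0"
         "B e1 f1 = 1" "B e1 f2 = 0" "B e1 f3 = 0" "B e2 f1 = 0" "B e2 f2 = 1" "B e2 f3 = 0"
         "B e3 f1 = 0" "B e3 f2 = 0" "B e3 f3 = 1"
         "B f1 e1 = 1" "B f2 e1 = 0" "B f3 e1 = 0" "B f1 e2 = 0" "B f2 e2 = 1" "B f3 e2 = 0"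
         "B f1 e3 = 0" "B f2 e3 = 0" "B f3 e3 = 1"
         "B f1 f1 = 0" "B f1 f2 = 0" "B f1 f3 = 0" "B f2 f1 = 0" "B f2 f2 = 0" "B f2 f3 = 0"
         "B f3 f1 = 0" "B f3 f2 = 0" "B f3 f3 = 0"
  shows "\<exists>f. isometric_lie_iso br B b6_bracket b6_form f"
proof -
  define h where "h u = (fst u $ 1) *\<^sub>R e1 + (fst u $ 2) *\<^sub>R e2 + (snd u $ 3) *\<^sub>R e3
     + (snd u $ 1) *\<^sub>R f1 + (snd u $ 2) *\<^sub>R f2 + (fst u $ 3) *\<^sub>R f3" for u :: "(real^3) \<times> (real^3)"
  note bre = bilinear_ladd[OF bbr] bilinear_radd[OF bbr] bilinear_lmul[OF bbr] bilinear_rmul[OF bbr]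
     bilinear_lneg[OF bbr] bilinear_rneg[OF bbr]
  note Be = bilinear_ladd[OF bB] bilinear_radd[OF bB] bilinear_lmul[OF bB] bilinear_rmul[OF bB]
  have lin: "linear h"
    by (rule linearI) (simp_all add: h_def algebra_simps)
  have hbr: "br (h u) (h v) = h (b6_bracket u v)" for u v
    by (simp add: h_def bre t z b6_comps algebra_simps)
  have hB: "B (h u) (h v) = b6_form u v" for u v
    by (simp add: h_def Be g b6_form_eq algebra_simps)
  have B0: "B 0 y = 0" for y using bilinear_lzero[OF bB] by simp
  have inj: "inj h"
  proof (rule linear_injective_0[OF lin, THEN iffD2], intro allI impI)
    fix u assume "h u = 0"
    then have *: "b6_form u v = 0" for v using hB[of u v] B0 by simp
    have "fst u $ i = 0" for i
      using *[of "(0, axis i 1)"] by (simp add: b6_form_def h3_pair_def inner_axis inner_axis')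
    moreover have "snd u $ i = 0" for i
      using *[of "(axis i 1, 0)"] by (simp add: b6_form_def h3_pair_def inner_axis inner_axis')
    ultimately show "u = 0" by (simp add: prod_eq_iff vec_eq_iff)
  qed
  have "dim (range h) = dim (UNIV :: ((real^3) \<times> (real^3)) set)"
    using lin inj by (simp add: dim_image_eq)
  then have "dim (range h) = DIM('a)" using dim by simp
  then have "span (range h) = UNIV" by (simp add: dim_eq_full)
  moreover have "span (range h) = range h"
    using lin by (simp add: span_eq_iff linear_subspace_image)
  ultimately have surj: "surj h" by simp
  have bij: "bij h" using inj surj by (simp add: bij_def)
  define f where "f = inv h"
  have hf: "h (f x) = x" for x using surj by (simp add: f_def surj_f_inv_f)
  have fh: "f (h u) = u" for u using inj by (simp add: f_def)
  show ?thesis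
    unfolding isometric_lie_iso_def
  proof (intro exI[of _ f] conjI allI)
    show "linear f"
    proof (rule linearI)
      fix x y :: 'a and c :: real
      have "h (f x + f y) = h (f (x + y))" using linear_add[OF lin] by (simp add: hf)
      then show "f (x + y) = f x + f y" using inj by (metis injD)
      have "h (c *\<^sub>R f x) = h (f (c *\<^sub>R x))" using linear_scale[OF lin] by (simp add: hf)
      then show "f (c *\<^sub>R x) = c *\<^sub>R f x" using inj by (metis injD)
    qed
    show "bij f" unfolding f_def by (rule bij_imp_bij_inv[OF bij])
    fix x y
    show "f (br x y) = b6_bracket (f x) (f y)"
      by (metis hbr hf fh)
    show "b6_form (f x) (f y) = B x y"
      by (metis hB hf)
  qed
qed
theorem corollary5p5:
  fixes br :: "'a::euclidean_space \<Rightarrow> 'a \<Rightarrow> 'a" and B :: "'a \<Rightarrow> 'a \<Rightarrow> real"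
  assumes "DIM('a) = 6"
    and "butterfly_algebra br B"
  shows "\<exists>f. isometric_lie_iso br B b6_bracket b6_form f"
proof -
  from assms(2) have bbr: "bilinear br" and alt: "\<And>x. br x x = 0"
    and nil: "\<And>x y z. br x (br y z) = 0" and bB: "bilinear B"
    and sym: "\<And>x y. B x y = B y x" and inv: "\<And>x y z. B (br x y) z = - B y (br x z)"
    and ex: "\<exists>z\<in>commutator_subalgebra br. z \<notin> form_radical B"
    unfolding butterfly_algebra_def lie_algebra_def two_step_nilpotent_def invariant_symmetric_form_def
    by blast+
  note bre = bilinear_ladd[OF bbr] bilinear_radd[OF bbr] bilinear_lmul[OF bbr] bilinear_rmul[OF bbr]
     bilinear_lneg[OF bbr] bilinear_rneg[OF bbr] bilinear_lsub[OF bbr] bilinear_rsub[OF bbr]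
  note Be = bilinear_ladd[OF bB] bilinear_radd[OF bB] bilinear_lmul[OF bB] bilinear_rmul[OF bB]
     bilinear_lneg[OF bB] bilinear_rneg[OF bB] bilinear_lsub[OF bB] bilinear_rsub[OF bB]
  have anti: "br y x = - br x y" for x y
  proof -
    have "br (x+y) (x+y) = br x x + br x y + (br y x + br y y)" by (simp add: bre)
    then have "br x y + br y x = 0" by (simp add: alt)
    then show ?thesis by (simp add: eq_neg_iff_add_eq_0 add.commute)
  qed
  have nil2: "br (br y z) x = 0" for x y z using anti[of "br y z" x] nil by simp
  have cyc: "B (br x y) z = B (br y z) x" for x y z
  proof -
    have "B (br y z) x = - B z (br y x)" by (rule inv)
    also have "\<dots> = B z (br x y)" by (simp add: anti[of x y] bilinear_rneg[OF bB])
    also have "\<dots> = B (br x y) z" by (rule sym)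
    finally show ?thesis by simp
  qed
  have v1: "B (br x y) x = 0" for x y using inv[of x y x] alt bilinear_rzero[OF bB] by simp
  have v2: "B (br x y) y = 0" for x y using inv[of x y y] sym[of y "br x y"] by simp
  have ff: "B (br x y) (br z w) = 0" for x y z w using inv[of x y "br z w"] nil bilinear_rzero[OF bB] by simp
  obtain x y w where k: "B (br x y) w \<noteq> 0"
  proof (rule ccontr)
    assume "\<not> thesis"
    with that have all: "\<And>x y w. B (br x y) w = 0" by blast
    obtain z where zc: "z \<in> span {br x y | x y. True}" and zr: "z \<notin> form_radical B"
      using ex unfolding commutator_subalgebra_def by blast
    have "subspace (form_radical B)"
      unfolding subspace_def form_radical_def
      by (simp add: Be bilinear_lzero[OF bB])
    moreover have "{br x y | x y. True} \<subseteq> form_radical B"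
      using all unfolding form_radical_def by blast
    ultimately have "z \<in> form_radical B" using zc span_minimal by blast
    with zr show False by simp
  qed
  define a where "a = x"
  define b where "b = y"
  define c where "c = (1 / B (br x y) w) *\<^sub>R w"
  have abc: "B (br a b) c = 1" using k by (simp add: a_def b_def c_def Be)
  define f1 where "f1 = br b c"
  define f2 where "f2 = br c a"
  define f3 where "f3 = br a b"
  have F: "B f1 a = 1" "B f2 b = 1" "B f3 c = 1"
          "B a f1 = 1" "B b f2 = 1" "B c f3 = 1"
  proof -
    have 1: "B f1 a = 1" "B f2 b = 1" "B f3 c = 1"
      using abc cyc[of a b c] cyc[of c a b] unfolding f1_def f2_def f3_def by simp_all
    then show "B f1 a = 1" "B f2 b = 1" "B f3 c = 1"
          "B a f1 = 1" "B b f2 = 1" "B c f3 = 1"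
      using sym[of a f1] sym[of b f2] sym[of c f3] by simp_all
  qed
  have F0: "B f1 b = 0" "B f1 c = 0" "B f2 c = 0" "B f2 a = 0" "B f3 a = 0" "B f3 b = 0"
     "B b f1 = 0" "B c f1 = 0" "B c f2 = 0" "B a f2 = 0" "B a f3 = 0" "B b f3 = 0"
  proof -
    have 1: "B f1 b = 0" "B f1 c = 0" "B f2 c = 0" "B f2 a = 0" "B f3 a = 0" "B f3 b = 0"
      unfolding f1_def f2_def f3_def using v1 v2 by simp_all
    then show "B f1 b = 0" "B f1 c = 0" "B f2 c = 0" "B f2 a = 0" "B f3 a = 0" "B f3 b = 0"
     "B b f1 = 0" "B c f1 = 0" "B c f2 = 0" "B a f2 = 0" "B a f3 = 0" "B b f3 = 0"
      using sym[of b f1] sym[of c f1] sym[of c f2] sym[of a f2] sym[of a f3] sym[of b f3] by simp_all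
  qed
  have FF: "B f1 f1 = 0" "B f1 f2 = 0" "B f1 f3 = 0" "B f2 f1 = 0" "B f2 f2 = 0" "B f2 f3 = 0"
         "B f3 f1 = 0" "B f3 f2 = 0" "B f3 f3 = 0"
    unfolding f1_def f2_def f3_def using ff by simp_all
  have Z: "br u f1 = 0" "br u f2 = 0" "br u f3 = 0" "br f1 u = 0" "br f2 u = 0" "br f3 u = 0" for u
    unfolding f1_def f2_def f3_def using nil nil2 by simp_all
  have S: "B b a = B a b" "B c a = B a c" "B c b = B b c" using sym[of b a] sym[of c a] sym[of c b] by simp_all
  define e1 where "e1 = a - (B a a / 2) *\<^sub>R f1 - (B a b / 2) *\<^sub>R f2 - (B a c / 2) *\<^sub>R f3"
  define e2 where "e2 = b - (B a b / 2) *\<^sub>R f1 - (B b b / 2) *\<^sub>R f2 - (B b c / 2) *\<^sub>R f3"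
  define e3 where "e3 = c - (B a c / 2) *\<^sub>R f1 - (B b c / 2) *\<^sub>R f2 - (B c c / 2) *\<^sub>R f3"
  have AA: "br a a = 0" "br b b = 0" "br c c = 0" "br b a = - f3" "br c b = - f1" "br a c = - f2"
    unfolding f1_def f2_def f3_def by (simp_all add: alt anti[of a b] anti[of b c] anti[of c a])
  show ?thesis
  proof (rule build[OF assms(1) bbr bB, of e1 e2 f3 e3 f2 f1])
  qed (simp_all add: e1_def e2_def e3_def bre Be Z AA F F0 FF S f1_def[symmetric] f2_def[symmetric] f3_def[symmetric] algebra_simps)
qed
end
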